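(* Let $X$ be a locally compact space, $Y$ a locally Hausdorff space and $p:X\to Y$ a continuous map all of whose leaves are Hausdorff. Let $L$ be a compact leaf of $p$ which is open in the fiber $p^{-1}(p(L))$. Then for every open neighbourhood $V$ of $L$ in $X$ there exists an open neighbourhood $U\subset V$ of $L$ which is a union of compact leaves of $p$.
   Context: For a continuous map $p:X\to Y$, a leaf of $p$ is a connected component of a fiber $p^{-1}(y)$, $y\in Y$, equipped with the subspace topology from $X$. *)

theory Defs
  imports "HOL-Analysis.Analysis"
begin

definition fiber_of :: "'a topology \<Rightarrow> ('a \<Rightarrow> 'b) \<Rightarrow> 'b \<Rightarrow> 'a set" where
  "fiber_of X p y = {x \<in> topspace X. p x = y}"

definition leaf_of :: "'a topology \<Rightarrow> ('a \<Rightarrow> 'b) \<Rightarrow> 'a set \<Rightarrow> bool" where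
  "leaf_of X p L \<longleftrightarrow>
     (\<exists>x \<in> topspace X. L = connected_component_of_set (subtopology X (fiber_of X p (p x))) x)"

definition locally_Hausdorff_space :: "'a topology \<Rightarrow> bool" where
  "locally_Hausdorff_space Y \<longleftrightarrow>
     (\<forall>y \<in> topspace Y. \<exists>W. openin Y W \<and> y \<in> W \<and> Hausdorff_space (subtopology Y W))"

end

theory Submission
  imports Defs
begin

theorem theorem3p3:
  fixes X :: "'a topology" and Y :: "'b topology" and p :: "'a \<Rightarrow> 'b"
    and L V :: "'a set"
  assumes "neighbourhood_base_of (compactin X) X"
    and "locally_Hausdorff_space Y"
    and "continuous_map X Y p"
    and "\<And>K. leaf_of X p K \<Longrightarrow> Hausdorff_space (subtopology X K)"
    and "leaf_of X p L" and "compactin X L"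
    and "\<forall>x \<in> L. openin (subtopology X (fiber_of X p (p x))) L"
    and "openin X V" and "L \<subseteq> V"
  shows "\<exists>U. openin X U \<and> L \<subseteq> U \<and> U \<subseteq> V \<and>
           (\<exists>\<L>. (\<forall>K \<in> \<L>. leaf_of X p K \<and> compactin X K) \<and> U = \<Union>\<L>)"
proof -
  note nb = assms(1)[unfolded neighbourhood_base_of]
  have cont: "continuous_map X Y p" by fact
  obtain x0 where x0: "x0 \<in> topspace X"
    and Ldef: "L = connected_component_of_set (subtopology X (fiber_of X p (p x0))) x0"
    using assms(5) unfolding leaf_of_def by blast
  define y where "y = p x0"
  define F where "F = fiber_of X p y"
  have Ftop: "F \<subseteq> topspace X" unfolding F_def fiber_of_def by auto
  have x0F: "x0 \<in> F" unfolding F_def fiber_of_def y_def using x0 by auto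
  have LF: "L \<subseteq> F" using Ldef connected_component_of_subset_topspace[of "subtopology X F" x0] Ftop
    unfolding F_def y_def by auto
  have x0L: "x0 \<in> L" using Ldef x0F connected_component_of_refl[of "subtopology X F" x0] Ftop
    unfolding F_def y_def by (auto simp: inf.absorb2)
  have pL: "\<And>z. z \<in> L \<Longrightarrow> p z = y" using LF unfolding F_def fiber_of_def by auto
  have "openin (subtopology X F) L" using assms(7) x0L unfolding F_def y_def by auto
  then obtain G where G: "openin X G" "L = G \<inter> F" by (auto simp: openin_subtopology)
  have yY: "y \<in> topspace Y" using cont x0 unfolding y_def by (intro funcset_mem[of p "topspace X"]) (simp_all add: continuous_map_def)
  obtain W where W: "openin Y W" "y \<in> W" "Hausdorff_space (subtopology Y W)"
    using assms(2) yY unfolding locally_Hausdorff_space_def by blast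
  have WY: "W \<subseteq> topspace Y" using W(1) openin_subset by auto
  define PW where "PW = {x \<in> topspace X. p x \<in> W}"
  have PWo: "openin X PW" unfolding PW_def using openin_continuous_map_preimage[OF cont W(1)] .
  define A where "A = V \<inter> G \<inter> PW"
  have Ao: "openin X A" unfolding A_def using assms(8) G(1) PWo by auto
  have LA: "L \<subseteq> A" unfolding A_def PW_def using assms(9) G(2) pL W(2) LF Ftop by auto
  have "\<forall>x\<in>L. \<exists>Q K. openin X Q \<and> compactin X K \<and> x \<in> Q \<and> Q \<subseteq> K \<and> K \<subseteq> A"
  proof
    fix x assume "x \<in> L"
    then have "openin X A \<and> x \<in> A" using Ao LA by auto
    then show "\<exists>Q K. openin X Q \<and> compactin X K \<and> x \<in> Q \<and> Q \<subseteq> K \<and> K \<subseteq> A"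
      using nb by metis
  qed
  then obtain Of Kf where OK: "\<And>x. x \<in> L \<Longrightarrow> openin X (Of x) \<and> compactin X (Kf x) \<and> x \<in> Of x
      \<and> Of x \<subseteq> Kf x \<and> Kf x \<subseteq> A" by metis
  have "\<exists>\<F>. finite \<F> \<and> \<F> \<subseteq> Of ` L \<and> L \<subseteq> \<Union>\<F>"
  proof (rule compactinD[OF assms(6)])
    show "\<And>U. U \<in> Of ` L \<Longrightarrow> openin X U" using OK by auto
    show "L \<subseteq> \<Union>(Of ` L)" using OK by auto
  qed
  then obtain T where T: "finite T" "T \<subseteq> L" "L \<subseteq> \<Union>(Of ` T)"
    by (metis finite_subset_image)
  define Q where "Q = \<Union>(Of ` T)"
  define K where "K = \<Union>(Kf ` T)"
  have Oo: "openin X Q" unfolding Q_def using OK T(2) by (intro openin_Union) auto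
  have Kc: "compactin X K" unfolding K_def using OK T by (intro compactin_Union) auto
  have OK2: "Q \<subseteq> K"
  proof
    fix z assume "z \<in> Q"
    then obtain t where "t \<in> T" "z \<in> Of t" unfolding Q_def by blast
    moreover have "Of t \<subseteq> Kf t" using OK \<open>t \<in> T\<close> T(2) by blast
    ultimately show "z \<in> K" unfolding K_def by blast
  qed
  have KA: "K \<subseteq> A"
  proof
    fix z assume "z \<in> K"
    then obtain t where "t \<in> T" "z \<in> Kf t" unfolding K_def by blast
    moreover have "Kf t \<subseteq> A" using OK \<open>t \<in> T\<close> T(2) by blast
    ultimately show "z \<in> A" by blast
  qed
  have LO: "L \<subseteq> Q" unfolding Q_def using T(3) .
  have Ktop: "K \<subseteq> topspace X" using Kc compactin_subset_topspace by auto
  have Kcs: "compact_space (subtopology X K)" using Kc compactin_subspace by auto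
  define B where "B = K - Q"
  have "closedin (subtopology X K) B"
    unfolding B_def closedin_subtopology
    by (rule exI[of _ "topspace X - Q"]) (use Oo Ktop in auto)
  then have Bc: "compactin X B"
    using closedin_compact_space[OF Kcs] compactin_subtopology by blast
  have pBc: "compactin Y (p ` B)" using image_compactin[OF Bc cont] .
  have pBW: "p ` B \<subseteq> W" using KA unfolding B_def A_def PW_def by auto
  have "closedin (subtopology Y W) (p ` B)"
    using compactin_imp_closedin[OF W(3)] pBc pBW compactin_subtopology by blast
  then have "openin (subtopology Y W) (W - p ` B)"
    using openin_diff[OF openin_topspace] WY by (metis closedin_def inf.absorb2 topspace_subtopology)
  then have No: "openin Y (W - p ` B)" using openin_trans_full W(1) by blast
  define N where "N = W - p ` B"
  have yN: "y \<notin> p ` B"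
  proof
    assume "y \<in> p ` B"
    then obtain z where z: "z \<in> K" "z \<notin> Q" "p z = y" unfolding B_def by auto
    then have "z \<in> G" "z \<in> topspace X" using KA Ktop unfolding A_def by auto
    then have "z \<in> L" using G(2) z unfolding F_def fiber_of_def by auto
    then show False using z LO by auto
  qed
  define U where "U = Q \<inter> {x \<in> topspace X. p x \<in> N}"
  have Uo: "openin X U" unfolding U_def N_def
    using Oo openin_continuous_map_preimage[OF cont No] by auto
  have LU: "L \<subseteq> U" unfolding U_def N_def using LO pL yN W(2) LF Ftop by auto
  have UV: "U \<subseteq> V" unfolding U_def using OK2 KA unfolding A_def by auto
  define \<L> where "\<L> = {C. leaf_of X p C \<and> compactin X C \<and> C \<subseteq> U}"
  have "U \<subseteq> \<Union>\<L>"
  proof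
    fix x assume xU: "x \<in> U"
    have xX: "x \<in> topspace X" using xU unfolding U_def by auto
    define Fx where "Fx = fiber_of X p (p x)"
    define C where "C = connected_component_of_set (subtopology X Fx) x"
    have Fxtop: "Fx \<subseteq> topspace X" unfolding Fx_def fiber_of_def by auto
    have xFx: "x \<in> Fx" unfolding Fx_def fiber_of_def using xX by auto
    have leafC: "leaf_of X p C" unfolding leaf_of_def C_def Fx_def using xX by blast
    have CFx: "C \<subseteq> Fx" using connected_component_of_subset_topspace[of "subtopology X Fx" x] Fxtop
      unfolding C_def by auto
    have xC: "x \<in> C" using xFx connected_component_of_refl[of "subtopology X Fx" x] Fxtop
      unfolding C_def by (auto simp: inf.absorb2)
    have pC: "\<And>z. z \<in> C \<Longrightarrow> p z = p x" using CFx unfolding Fx_def fiber_of_def by auto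
    have Cconn: "connectedin X C"
      using connectedin_connected_component_of[of "subtopology X Fx" x] connectedin_subtopology
      unfolding C_def by blast
    have Ctop: "C \<subseteq> topspace X" using CFx Fxtop by auto
    have Ccs: "connected_space (subtopology X C)" using Cconn connectedin_def by blast
    have HC: "Hausdorff_space (subtopology X C)" using assms(4) leafC by blast
    have pxN: "p x \<in> N" using xU unfolding U_def by auto
    have CKO: "C \<inter> K = C \<inter> Q"
    proof
      show "C \<inter> K \<subseteq> C \<inter> Q"
      proof
        fix z assume z: "z \<in> C \<inter> K"
        show "z \<in> C \<inter> Q"
        proof (rule ccontr)
          assume "z \<notin> C \<inter> Q"
          then have "z \<in> B" using z unfolding B_def by auto
          then have "p z \<in> p ` B" by auto
          then show False using pC z pxN unfolding N_def by auto
        qed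
      qed
    qed (use OK2 in auto)
    have "closedin (subtopology X Fx) C"
      unfolding C_def by (rule closedin_connected_component_of)
    then obtain T' where T': "closedin X T'" "C = T' \<inter> Fx" by (auto simp: closedin_subtopology)
    have pxW: "p x \<in> W" using pxN unfolding N_def by auto
    have "closedin (subtopology Y W) {p x}"
      using Hausdorff_imp_t1_space[OF W(3)] t1_space_closedin_singleton pxW WY by fastforce
    moreover have "continuous_map (subtopology X K) (subtopology Y W) p"
      using continuous_map_from_subtopology[OF cont] KA unfolding A_def PW_def
      by (auto simp: continuous_map_in_subtopology)
    ultimately have cl1: "closedin (subtopology X K) {z \<in> topspace (subtopology X K). p z \<in> {p x}}"
      using closedin_continuous_map_preimage by blast
    have cl2: "closedin (subtopology X K) (T' \<inter> K)"
      using T'(1) by (auto simp: closedin_subtopology)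
    have eq: "C \<inter> K = (T' \<inter> K) \<inter> {z \<in> topspace (subtopology X K). p z \<in> {p x}}"
      using T'(2) Ktop unfolding Fx_def fiber_of_def by auto
    have "closedin (subtopology X K) (C \<inter> K)" unfolding eq using cl2 cl1 by (rule closedin_Int)
    then have CKc: "compactin X (C \<inter> K)"
      using closedin_compact_space[OF Kcs] compactin_subtopology by blast
    have "closedin (subtopology X C) (C \<inter> Q)"
      using compactin_imp_closedin[OF HC] CKc CKO compactin_subtopology by (metis inf_le1)
    moreover have "openin (subtopology X C) (C \<inter> Q)"
      using Oo by (auto simp: openin_subtopology)
    ultimately have "C \<inter> Q = {} \<or> C \<inter> Q = C"
      using Ccs connected_space_clopen_in Ctop by (metis inf.absorb2 topspace_subtopology)
    moreover have "x \<in> Q" using xU unfolding U_def by auto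
    ultimately have CO: "C \<subseteq> Q" using xC by auto
    have "C \<subseteq> U" unfolding U_def using CO pC pxN Ctop by auto
    moreover have "compactin X C" using CKc CKO CO by (metis inf.absorb1)
    ultimately have "C \<in> \<L>" unfolding \<L>_def using leafC by auto
    then show "x \<in> \<Union>\<L>" using xC by auto
  qed
  moreover have "\<Union>\<L> \<subseteq> U" unfolding \<L>_def by auto
  ultimately have "U = \<Union>\<L>" by auto
  moreover have "\<forall>K \<in> \<L>. leaf_of X p K \<and> compactin X K" unfolding \<L>_def by auto
  ultimately have "\<exists>\<L>. (\<forall>K \<in> \<L>. leaf_of X p K \<and> compactin X K) \<and> U = \<Union>\<L>" by (intro exI[of _ \<L>]) simp
  with Uo LU UV show ?thesis by (intro exI[of _ U]) simp
qed

end
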